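(* Let $\widehat A=\mathbb{C}[[x,y,z]]$ and let $F=(f,g,h)$ and $F'=(f',g',h')$ be Poisson triples on $\widehat A$ with $f_{000}\neq 0$. If $f_{ijk}=f'_{ijk}$ and $h_{ijk}=h'_{ijk}$ for all $i,j,k\in\mathbb{N}_0$ and $g_{ij0}=g'_{ij0}$ for all $i,j\in\mathbb{N}_0$, then $F=F'$.
   Context: For $f\in\widehat A$, $f_{ijk}$ denotes the coefficient of $x^iy^jz^k$. $F=(f,g,h)\in\widehat A^3$ is a Poisson triple if there is a Poisson bracket on $\widehat A$ (Lie bracket with each $\{b,-\}$ a $\mathbb{C}$-derivation) such that $\{y,z\}=f$, $\{z,x\}=g$, $\{x,y\}=h$. *)

theory Defs
  imports "HOL-Computational_Algebra.Formal_Power_Series"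
begin

text \<open>The ring C[[x,y,z]] realised as iterated formal power series: x is the outer
variable, then y, then z.\<close>

type_synonym A3 = "complex fps fps fps"

definition coeff3 :: "A3 \<Rightarrow> nat \<Rightarrow> nat \<Rightarrow> nat \<Rightarrow> complex" where
  "coeff3 f i j k = fps_nth (fps_nth (fps_nth f i) j) k"

definition X3 :: A3 where "X3 = fps_X"
definition Y3 :: A3 where "Y3 = fps_const fps_X"
definition Z3 :: A3 where "Z3 = fps_const (fps_const fps_X)"

definition scal3 :: "complex \<Rightarrow> A3" where
  "scal3 c = fps_const (fps_const (fps_const c))"

definition is_derivation :: "(A3 \<Rightarrow> A3) \<Rightarrow> bool" where
  "is_derivation D \<longleftrightarrow>
     (\<forall>a b. D (a + b) = D a + D b) \<and>
     (\<forall>c a. D (scal3 c * a) = scal3 c * D a) \<and>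
     (\<forall>a b. D (a * b) = a * D b + b * D a)"

definition lie_bracket :: "(A3 \<Rightarrow> A3 \<Rightarrow> A3) \<Rightarrow> bool" where
  "lie_bracket P \<longleftrightarrow>
     (\<forall>a b c. P (a + b) c = P a c + P b c) \<and>
     (\<forall>a b c. P a (b + c) = P a b + P a c) \<and>
     (\<forall>s a b. P (scal3 s * a) b = scal3 s * P a b) \<and>
     (\<forall>s a b. P a (scal3 s * b) = scal3 s * P a b) \<and>
     (\<forall>a. P a a = 0) \<and>
     (\<forall>a b c. P a (P b c) + P b (P c a) + P c (P a b) = 0)"

definition poisson_bracket :: "(A3 \<Rightarrow> A3 \<Rightarrow> A3) \<Rightarrow> bool" where
  "poisson_bracket P \<longleftrightarrow> lie_bracket P \<and> (\<forall>b. is_derivation (P b))"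

definition poisson_triple :: "A3 \<Rightarrow> A3 \<Rightarrow> A3 \<Rightarrow> bool" where
  "poisson_triple f g h \<longleftrightarrow>
     (\<exists>P. poisson_bracket P \<and> P Y3 Z3 = f \<and> P Z3 X3 = g \<and> P X3 Y3 = h)"

end

theory Submission
  imports Defs
begin
unbundle fps_syntax


definition fmap :: "('a \<Rightarrow> 'b) \<Rightarrow> 'a fps \<Rightarrow> 'b fps" where
  "fmap \<phi> a = Abs_fps (\<lambda>n. \<phi> (a$n))"

lemma fmap_nth[simp]: "fmap \<phi> a $ n = \<phi> (a$n)"
  by (simp add: fmap_def)

lemma fmap_add:
  assumes "\<And>x y. \<phi> (x+y) = \<phi> x + \<phi> y"
  shows "fmap \<phi> (a+b) = fmap \<phi> a + fmap \<phi> b"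
  by (rule fps_ext) (simp add: assms)

lemma add_zero_hom:
  fixes \<phi> :: "'a::ab_group_add \<Rightarrow> 'b::ab_group_add"
  assumes "\<And>x y. \<phi> (x+y) = \<phi> x + \<phi> y"
  shows "\<phi> 0 = 0"
  using assms[of 0 0] by simp

lemma add_sum_hom:
  fixes \<phi> :: "'a::ab_group_add \<Rightarrow> 'b::ab_group_add"
  assumes "\<And>x y. \<phi> (x+y) = \<phi> x + \<phi> y"
  shows "\<phi> (sum g A) = sum (\<lambda>i. \<phi> (g i)) A"
  using sum_comp_morphism[of \<phi> g A, OF add_zero_hom[OF assms] assms] by (simp add: o_def)

lemma fmap_der:
  fixes \<phi> :: "'a::comm_ring_1 \<Rightarrow> 'a"
  assumes add: "\<And>x y. \<phi> (x+y) = \<phi> x + \<phi> y"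
    and mul: "\<And>x y. \<phi> (x*y) = x * \<phi> y + y * \<phi> x"
  shows "fmap \<phi> (a*b) = a * fmap \<phi> b + b * fmap \<phi> a"
proof (rule fps_ext)
  fix n
  have "fmap \<phi> (a*b) $ n = (\<Sum>i=0..n. a$i * \<phi> (b$(n-i)) + \<phi> (a$i) * b$(n-i))"
    by (simp add: fps_mult_nth add_sum_hom[OF add] mul mult.commute)
  also have "\<dots> = (a * fmap \<phi> b) $ n + (fmap \<phi> a * b) $ n"
    by (simp add: fps_mult_nth sum.distrib)
  finally show "fmap \<phi> (a*b) $ n = (a * fmap \<phi> b + b * fmap \<phi> a) $ n"
    by (simp add: mult.commute)
qed

lemma fmap_hom:
  fixes \<phi> :: "'a::comm_ring_1 \<Rightarrow> 'b::comm_ring_1"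
  assumes add: "\<And>x y. \<phi> (x+y) = \<phi> x + \<phi> y"
    and mul: "\<And>x y. \<phi> (x*y) = \<phi> x * \<phi> y"
  shows "fmap \<phi> (a*b) = fmap \<phi> a * fmap \<phi> b"
  by (rule fps_ext) (simp add: fps_mult_nth add_sum_hom[OF add] mul)

lemma fmap_const:
  assumes "\<phi> 0 = 0"
  shows "fmap \<phi> (fps_const c) = fps_const (\<phi> c)"
  by (rule fps_ext) (simp add: assms)

definition dx :: "A3 \<Rightarrow> A3" where "dx = fps_deriv"
definition dy :: "A3 \<Rightarrow> A3" where "dy = fmap fps_deriv"
definition dz :: "A3 \<Rightarrow> A3" where "dz = fmap (fmap fps_deriv)"
definition ev0 :: "A3 \<Rightarrow> A3" where "ev0 = fmap (fmap (\<lambda>p. fps_const (p$0)))"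

lemma dfd_add: "fmap fps_deriv (a+b) = fmap fps_deriv a + fmap fps_deriv (b::'a::comm_ring_1 fps fps)"
  by (rule fmap_add) simp
lemma dfd_mul: "fmap fps_deriv (a*b) = a * fmap fps_deriv b + b * fmap fps_deriv (a::'a::comm_ring_1 fps fps)"
  by (rule fmap_der) auto

lemma dx_add[simp]: "dx (a+b) = dx a + dx b" by (simp add: dx_def)
lemma dy_add[simp]: "dy (a+b) = dy a + dy b" by (simp add: dy_def dfd_add)
lemma dz_add[simp]: "dz (a+b) = dz a + dz b" by (simp add: dz_def fmap_add dfd_add)
lemma dx_mul[simp]: "dx (a*b) = a * dx b + b * dx a" by (simp add: dx_def)
lemma dy_mul[simp]: "dy (a*b) = a * dy b + b * dy a" by (simp add: dy_def dfd_mul)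
lemma dz_mul[simp]: "dz (a*b) = a * dz b + b * dz a"
  unfolding dz_def by (rule fmap_der) (simp_all add: dfd_add dfd_mul)

lemma dX[simp]: "dx X3 = 1" "dy X3 = 0" "dz X3 = 0"
  by (simp_all add: dx_def dy_def dz_def X3_def fps_eq_iff fps_X_nth)
lemma dY[simp]: "dx Y3 = 0" "dy Y3 = 1" "dz Y3 = 0"
  by (simp_all add: dx_def dy_def dz_def Y3_def fps_eq_iff fps_X_nth)
lemma dZ[simp]: "dx Z3 = 0" "dy Z3 = 0" "dz Z3 = 1"
  by (simp_all add: dx_def dy_def dz_def Z3_def fps_eq_iff fps_X_nth)
lemma dscal[simp]: "dx (scal3 c) = 0" "dy (scal3 c) = 0" "dz (scal3 c) = 0"
  by (simp_all add: dx_def dy_def dz_def scal3_def fps_eq_iff)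



lemma cutoff_sum: "fps_cutoff n f = (\<Sum>i<n. fps_const (f$i) * fps_X^i)"
  by (rule fps_ext) (simp add: fps_sum_nth if_distrib[where f="\<lambda>x. _ * x"] cong: if_cong)

lemma decomp1: "f = (\<Sum>i<n. fps_const (f$i) * fps_X^i) + fps_X^n * fps_shift n (f::'a::comm_ring_1 fps)"
  using fps_shift_cutoff'[of n f] by (simp add: cutoff_sum add.commute)

lemma fps_const_sum: "fps_const (sum g A :: 'a::comm_ring_1) = (\<Sum>i\<in>A. fps_const (g i))"
  by (induction A rule: infinite_finite_induct) (simp_all flip: fps_const_add)

definition Ed :: "(A3 \<Rightarrow> A3) \<Rightarrow> A3 \<Rightarrow> A3" where
  "Ed D a = D a - (dx a * D X3 + dy a * D Y3 + dz a * D Z3)"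

definition Jc :: "nat \<Rightarrow> A3 \<Rightarrow> bool" where
  "Jc N e \<longleftrightarrow> (\<forall>i j k. i < N \<longrightarrow> j < N \<longrightarrow> k < N \<longrightarrow> e$i$j$k = 0)"

lemma Jc_add: "Jc N a \<Longrightarrow> Jc N b \<Longrightarrow> Jc N (a+b)"
  by (simp add: Jc_def)
lemma Jc_0: "Jc N 0" by (simp add: Jc_def)
lemma Jc_sum: "(\<And>i. i \<in> A \<Longrightarrow> Jc N (g i)) \<Longrightarrow> Jc N (sum g A)"
  by (induction A rule: infinite_finite_induct) (auto simp: Jc_0 Jc_add)

lemma X3_pow_nth: "(X3^n * e) $ a = (if a < n then 0 else e $ (a-n))"
  by (simp add: X3_def fps_X_power_mult_nth)
lemma Y3_pow_nth: "(Y3^n * e) $ a $ b = (if b < n then 0 else e $ a $ (b-n))"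
  by (simp add: Y3_def fps_X_power_mult_nth)
lemma Z3_pow_nth: "(Z3^n * e) $ a $ b $ c = (if c < n then 0 else e $ a $ b $ (c-n))"
  by (simp add: Z3_def fps_X_power_mult_nth)

lemma Jc_X: "Jc N e \<Longrightarrow> Jc N (X3^n * e)" by (simp add: Jc_def X3_pow_nth)
lemma Jc_Y: "Jc N e \<Longrightarrow> Jc N (Y3^n * e)" by (simp add: Jc_def Y3_pow_nth)
lemma Jc_Z: "Jc N e \<Longrightarrow> Jc N (Z3^n * e)" by (simp add: Jc_def Z3_pow_nth)
lemma Jc_XN: "Jc N (X3^N * e)" by (simp add: Jc_def X3_pow_nth)
lemma Jc_YN: "Jc N (Y3^N * e)" by (simp add: Jc_def Y3_pow_nth)
lemma Jc_ZN: "Jc N (Z3^N * e)" by (simp add: Jc_def Z3_pow_nth)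

lemma Jc_all: assumes "\<And>N. Jc N e" shows "e = 0"
proof -
  { fix i j k have "e$i$j$k = 0" using assms[of "Suc(i+j+k)"] by (simp add: Jc_def) }
  thus ?thesis by (simp add: fps_eq_iff)
qed

context
  fixes D :: "A3 \<Rightarrow> A3"
  assumes der: "is_derivation D"
begin

lemma D_add: "D (a+b) = D a + D b" using der unfolding is_derivation_def by blast
lemma D_mul: "D (a*b) = a * D b + b * D a" using der unfolding is_derivation_def by blast
lemma D_scal: "D (scal3 c * a) = scal3 c * D a" using der unfolding is_derivation_def by blast
lemma D_1: "D 1 = 0" using D_mul[of 1 1] by simp

lemma E_add: "Ed D (a+b) = Ed D a + Ed D b"
  by (simp add: Ed_def D_add algebra_simps)
lemma E_mul: "Ed D (a*b) = a * Ed D b + b * Ed D a"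
  by (simp add: Ed_def D_mul algebra_simps)
lemma E_sum: "Ed D (sum g A) = (\<Sum>i\<in>A. Ed D (g i))"
  by (rule add_sum_hom) (rule E_add)
lemma E_XYZ: "Ed D X3 = 0" "Ed D Y3 = 0" "Ed D Z3 = 0"
  by (simp_all add: Ed_def)
lemma E_1: "Ed D 1 = 0"
  using E_mul[of 1 1] by simp
lemma E_scal: "Ed D (scal3 c) = 0"
proof -
  have "D (scal3 c) = 0" by (metis D_scal D_1 mult_1_right mult_zero_right)
  thus ?thesis by (simp add: Ed_def)
qed
lemma E_pow: "Ed D b = 0 \<Longrightarrow> Ed D (b^n) = 0"
  by (induction n) (simp_all add: E_1 E_mul)
lemma E_powmul: "Ed D b = 0 \<Longrightarrow> Ed D (b^n * a) = b^n * Ed D a"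
  by (simp add: E_mul E_pow)

lemma E_lev3: "Jc N (Ed D (fps_const (fps_const c)))"
proof -
  have "(fps_const (fps_const c) :: A3) = fps_const (fps_const ((\<Sum>i<N. fps_const (c$i) * fps_X^i) + fps_X^N * fps_shift N c))"
    using decomp1[of c N] by simp
  also have "\<dots> = (\<Sum>i<N. Z3^i * scal3 (c$i)) + Z3^N * fps_const (fps_const (fps_shift N c))"
    by (simp add: fps_const_sum Z3_def scal3_def mult.commute flip: fps_const_mult fps_const_add fps_const_power)
  finally have e: "fps_const (fps_const c) = \<dots>" .
  show ?thesis unfolding e E_add E_sum E_powmul[OF E_XYZ(3)] E_scal
    by (simp add: Jc_ZN)
qed

lemma E_lev2: "Jc N (Ed D (fps_const b))"
proof -
  have "(fps_const b :: A3) = fps_const ((\<Sum>i<N. fps_const (b$i) * fps_X^i) + fps_X^N * fps_shift N b)"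
    using decomp1[of b N] by simp
  also have "\<dots> = (\<Sum>i<N. Y3^i * fps_const (fps_const (b$i))) + Y3^N * fps_const (fps_shift N b)"
    by (simp add: fps_const_sum Y3_def mult.commute flip: fps_const_mult fps_const_add fps_const_power)
  finally have e: "fps_const b = \<dots>" .
  show ?thesis unfolding e E_add E_sum E_powmul[OF E_XYZ(2)]
    by (intro Jc_add Jc_sum Jc_Y E_lev3 Jc_YN)
qed

lemma E_lev1: "Jc N (Ed D a)"
proof -
  have e: "a = (\<Sum>i<N. X3^i * fps_const (a$i)) + X3^N * fps_shift N a"
    using decomp1[of a N] by (simp add: X3_def mult.commute)
  show ?thesis by (subst e, unfold E_add E_sum E_powmul[OF E_XYZ(1)])
     (intro Jc_add Jc_sum Jc_X E_lev2 Jc_XN)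
qed

lemma chain: "D a = dx a * D X3 + dy a * D Y3 + dz a * D Z3"
proof -
  have "Ed D a = 0" by (rule Jc_all) (rule E_lev1)
  thus ?thesis by (simp add: Ed_def)
qed

end


lemma poisson_eq:
  assumes "poisson_triple f g h"
  shows "dy f*h - dz f*g - dx g*h + dz g*f + dx h*g - dy h*f = 0"
proof -
  obtain P where pb: "poisson_bracket P" and f: "P Y3 Z3 = f" and g: "P Z3 X3 = g" and h: "P X3 Y3 = h"
    using assms unfolding poisson_triple_def by blast
  have lie: "lie_bracket P" and der: "\<And>b. is_derivation (P b)" using pb by (auto simp: poisson_bracket_def)
  have addl: "\<And>a b c. P (a + b) c = P a c + P b c" and addr: "\<And>a b c. P a (b + c) = P a b + P a c"
    and alt: "\<And>a. P a a = 0"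
    and jac: "\<And>a b c. P a (P b c) + P b (P c a) + P c (P a b) = 0"
    using lie unfolding lie_bracket_def by blast+
  have anti: "P a b = - P b a" for a b
  proof -
    have "0 = P (a+b) (a+b)" using alt by simp
    also have "\<dots> = P a b + P b a" unfolding addl addr by (simp add: alt)
    finally show ?thesis by (metis eq_neg_iff_add_eq_0)
  qed
  have cx: "P X3 f = dy f * h - dz f * g"
    using chain[OF der[of X3], of f] by (simp add: alt h anti[of X3 Z3] g)
  have cy: "P Y3 g = - dx g * h + dz g * f"
    using chain[OF der[of Y3], of g] by (simp add: alt h anti[of Y3 X3] f)
  have cz: "P Z3 h = dx h * g - dy h * f"
    using chain[OF der[of Z3], of h] by (simp add: alt g anti[of Z3 Y3] f)
  have "P X3 f + P Y3 g + P Z3 h = 0" using jac[of X3 Y3 Z3] f g h by simp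
  thus ?thesis unfolding cx cy cz by (simp add: algebra_simps)
qed

lemma ev_add: "fmap (\<lambda>p. fps_const (p$0)) (a+b) = fmap (\<lambda>p. fps_const (p$0)) a + fmap (\<lambda>p. fps_const (p$0)) (b :: complex fps fps)"
  by (rule fmap_add) simp
lemma ev_mul: "fmap (\<lambda>p. fps_const (p$0)) (a*b) = fmap (\<lambda>p. fps_const (p$0)) a * fmap (\<lambda>p. fps_const (p$0)) (b :: complex fps fps)"
  by (rule fmap_hom) simp_all

lemma ev0_add: "ev0 (a+b) = ev0 a + ev0 b"
  unfolding ev0_def by (rule fmap_add) (rule ev_add)
lemma ev0_mul: "ev0 (a*b) = ev0 a * ev0 b"
  unfolding ev0_def by (rule fmap_hom) (simp_all add: ev_add ev_mul)
lemma ev0_nth: "ev0 a $ i $ j $ k = (if k = 0 then a $ i $ j $ 0 else 0)"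
  by (simp add: ev0_def)
lemma ev0_Z: "ev0 Z3 = 0"
  by (simp add: fps_eq_iff ev0_nth Z3_def fps_X_nth)
lemma ev0_of_nat: "ev0 (of_nat n) = of_nat n"
  by (simp add: fps_eq_iff ev0_nth flip: fps_of_nat)

lemma ev0_zero: "ev0 a = 0 \<Longrightarrow> \<exists>e. a = Z3 * e"
proof -
  assume h: "ev0 a = 0"
  have z: "a$i$j$0 = 0" for i j using arg_cong[OF h, of "\<lambda>x. x$i$j$0"] by (simp add: ev0_nth)
  have "a = Z3 * fmap (fmap (fps_shift 1)) a"
    using z by (simp add: fps_eq_iff Z3_def fps_X_power_mult_nth[of 1, simplified])
  thus ?thesis by blast
qed

lemma ev0_nz: "a$0$0$0 \<noteq> 0 \<Longrightarrow> ev0 a \<noteq> 0"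
  by (metis ev0_nth fps_zero_nth)

lemma d1[simp]: "dx 1 = 0" "dy 1 = 0" "dz 1 = 0"
  using dscal[of 1] by (simp_all add: scal3_def)

lemma dz_Zpow: "dz (Z3^(Suc n)) = of_nat (Suc n) * Z3^n"
proof (induction n)
  case 0 then show ?case by simp
next
  case (Suc n)
  have "dz (Z3^(Suc (Suc n))) = dz (Z3 * Z3^(Suc n))" by (simp only: power_Suc)
  also have "\<dots> = Z3 * (of_nat (Suc n) * Z3^n) + Z3^(Suc n)" by (simp only: dz_mul Suc dZ mult_1_right)
  also have "\<dots> = of_nat (Suc (Suc n)) * Z3^(Suc n)" by (simp add: algebra_simps)
  finally show ?case .
qed
lemma dx_Zpow: "dx (Z3^n) = 0"
  by (induction n) auto

lemma uniq_d:
  fixes f h d :: A3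
  assumes Q: "dz d * f - dz f * d - dx d * h + dx h * d = 0"
    and f0: "f$0$0$0 \<noteq> 0" and d0: "ev0 d = 0"
  shows "d = 0"
proof -
  have ind: "\<exists>e. d = Z3^(Suc m) * e" for m
  proof (induction m)
    case 0 then show ?case using ev0_zero[OF d0] by simp
  next
    case (Suc m)
    then obtain e where de: "d = Z3^(Suc m) * e" by blast
    have dzd: "dz d = Z3^m * (of_nat (Suc m) * e + Z3 * dz e)"
      unfolding de dz_mul dz_Zpow by (simp add: algebra_simps)
    have dxd: "dx d = Z3^m * (Z3 * dx e)"
      unfolding de by (simp add: dx_Zpow algebra_simps)
    have "Z3^m * ((of_nat (Suc m) * e + Z3 * dz e) * f - dz f * (Z3 * e) - Z3 * dx e * h + dx h * (Z3 * e)) = 0"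
    proof -
      have "dz d * f - dz f * d - dx d * h + dx h * d = Z3^m * ((of_nat (Suc m) * e + Z3 * dz e) * f - dz f * (Z3 * e) - Z3 * dx e * h + dx h * (Z3 * e))"
        unfolding dzd dxd by (subst (1 2) de) (simp add: algebra_simps del: dz_mul dx_mul)
      thus ?thesis using Q by simp
    qed
    moreover have "Z3 \<noteq> 0" using dZ(3) by (metis dz_def fmap_nth fps_deriv_0 fps_zero_nth zero_neq_one fps_ext)
    ultimately have B: "(of_nat (Suc m) * e + Z3 * dz e) * f - dz f * (Z3 * e) - Z3 * dx e * h + dx h * (Z3 * e) = 0"
      by simp
    have "of_nat (Suc m) * e * f = Z3 * (dz f * e + dx e * h - dx h * e - dz e * f)"
      using B by (simp add: algebra_simps)
    hence "ev0 (of_nat (Suc m) * e * f) = 0" by (simp add: ev0_mul ev0_Z)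
    hence "of_nat (Suc m) * ev0 e * ev0 f = 0" unfolding ev0_mul ev0_of_nat .
    moreover have "(of_nat (Suc m) :: A3) \<noteq> 0"
      by (metis of_nat_eq_0_iff nat.distinct(1) ev0_of_nat ev0_nth fps_zero_nth)
    ultimately have "ev0 e = 0" using ev0_nz[OF f0] by simp
    then obtain e' where "e = Z3 * e'" using ev0_zero by blast
    hence "d = Z3^(Suc (Suc m)) * e'" using de by (simp add: algebra_simps)
    thus ?case by blast
  qed
  { fix i j k
    obtain e where "d = Z3^(Suc k) * e" using ind by blast
    hence "d$i$j$k = 0" by (simp add: Z3_pow_nth del: power_Suc) }
  thus ?thesis by (simp add: fps_eq_iff)
qed

theorem lemma2p2:
  fixes f g h f' g' h' :: A3
  assumes "poisson_triple f g h"
    and "poisson_triple f' g' h'"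
    and "coeff3 f 0 0 0 \<noteq> 0"
    and "\<forall>i j k. coeff3 f i j k = coeff3 f' i j k"
    and "\<forall>i j k. coeff3 h i j k = coeff3 h' i j k"
    and "\<forall>i j. coeff3 g i j 0 = coeff3 g' i j 0"
  shows "(f, g, h) = (f', g', h')"
proof -
  have ff: "f' = f" using assms(4) by (simp add: fps_eq_iff coeff3_def)
  have hh: "h' = h" using assms(5) by (simp add: fps_eq_iff coeff3_def)
  have e1: "dy f*h - dz f*g - dx g*h + dz g*f + dx h*g - dy h*f = 0" by (rule poisson_eq[OF assms(1)])
  have e2: "dy f*h - dz f*g' - dx g'*h + dz g'*f + dx h*g' - dy h*f = 0"
    using poisson_eq[OF assms(2)] ff hh by simp
  have dz_diff: "dz (g - g') = dz g - dz g'" "dx (g - g') = dx g - dx g'"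
    using dz_add[of "g - g'" g'] dx_add[of "g - g'" g'] by simp_all
  have Q: "dz (g - g') * f - dz f * (g - g') - dx (g - g') * h + dx h * (g - g') = 0"
  proof -
    have "dz (g - g') * f - dz f * (g - g') - dx (g - g') * h + dx h * (g - g')
      = (dy f*h - dz f*g - dx g*h + dz g*f + dx h*g - dy h*f) - (dy f*h - dz f*g' - dx g'*h + dz g'*f + dx h*g' - dy h*f)"
      unfolding dz_diff by (simp add: algebra_simps)
    thus ?thesis using e1 e2 by simp
  qed
  have d0: "ev0 (g - g') = 0"
    using assms(6) by (simp add: fps_eq_iff ev0_nth coeff3_def)
  have "g - g' = 0" by (rule uniq_d[OF Q _ d0]) (use assms(3) in \<open>simp add: coeff3_def\<close>)
  thus ?thesis using ff hh by simp
qed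

end
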